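(* In the model described in the context, if $\tau \leq 2f$, then it is impossible to implement an a-audit operation satisfying completeness.
   Context: Model. An asynchronous system has an arbitrary number of client processes (writers, readers, auditors) and $n$ storage objects $o_1,\dots,o_n$. Each $o_k$ is a linearisable loggable read/write register holding a block from a domain $\mathbb{B}$ and a log $L_k$ (initially empty). Its operations are: rw-write($b$), which stores $b$ and returns an ack; rw-read(), which returns the currently stored block (or $\perp\notin\mathbb{B}$ if none) and appends to $L_k$ the record $\langle p_r, \mathit{label}(b)\rangle$, where $p_r$ is the invoking reader and $\mathit{label}(b)$ identifies the value from which block $b$ was derived; and rw-getLog(), which returns $L_k$. On top of these objects, a multi-writer multi-reader register over a value domain $\mathbb{V}$ is emulated by information dispersal. An a-write($v$) encodes $v$ into $n$ blocks $b_{v_1},\dots,b_{v_n}$ and sends $b_{v_k}$ to $o_k$. A reader can recover $v$ from any $\tau$ distinct blocks of $v$, and cannot recover it from fewer; $\tau>f$. Reads (a-read) are fast, i.e. they complete in a single communication round-trip between the reader and the objects. Concurrency between operations is unlimited, and writes may remain incomplete. Faults. Writers and auditors are honest and can only crash. Faulty readers may crash or send read requests to only a subset of the objects. At most $f$ storage objects are faulty. A faulty object may crash, omit its block from readers, omit records from its log when queried by auditors, and report records of read operations that never occurred. Providing set: in a history $\sigma$, $P_{p_r,v}$ is the set of objects $o_k$ such that $\sigma$ contains both an event in which $o_k$ receives a write request to store $b_{v_k}$ and an event in which $o_k$ responds $b_{v_k}$ to a read request from $p_r$. A value $v$ is effectively read by $p_r$ in $\sigma$ iff $|P_{p_r,v}|\ge\tau$.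 Audit. An a-audit operation obtains logs via rw-getLog. To be available it relies only on an auditing quorum $A$ of $n-f$ objects. It returns a set $E_A$ of evidences. An evidence $\mathcal{E}_{p_r,v}$ (reporting that $p_r$ effectively read $v$) is created from at least $t\ge 1$ records $\langle p_r,\mathit{label}(v)\rangle$ coming from distinct objects; $t$ is a threshold parameter. Completeness: for every reader $p_r$ and every value $v$, if $v$ was effectively read by $p_r$ ($|P_{p_r,v}|\ge\tau$) before the a-audit is invoked, then $\mathcal{E}_{p_r,v}\in E_A$. *)

theory Defs
  imports Main
begin

(* Storage objects are o_0, ..., o_{n-1} (indices k < n).
   Readers have type 'r, values of the emulated register have type 'v;
   label(b_{v_k}) is identified with the value v itself.
   A log record <p_r, label(v)> is represented as the pair (p_r, v).

   A history sigma (up to the invocation of the a-audit) is abstracted by: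
     Fa  : the set of faulty storage objects
     W   : (k, v) in W  iff o_k received a write request to store b_{v_k}
     R   : (k, p, v) in R iff o_k responded b_{v_k} to a read request from p
     Lg  : Lg k is the log that object o_k reports to the auditor via rw-getLog *)

definition providing :: "(nat \<times> 'v) set \<Rightarrow> (nat \<times> 'r \<times> 'v) set \<Rightarrow> 'r \<Rightarrow> 'v \<Rightarrow> nat set" where
  "providing W R p v = {k. (k, v) \<in> W \<and> (k, p, v) \<in> R}"

definition effectively_read :: "nat \<Rightarrow> (nat \<times> 'v) set \<Rightarrow> (nat \<times> 'r \<times> 'v) set \<Rightarrow> 'r \<Rightarrow> 'v \<Rightarrow> bool" where
  "effectively_read \<tau> W R p v \<longleftrightarrow> card (providing W R p v) \<ge> \<tau>"

(* Admissible history: at most f faulty objects; correct objects only return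
   blocks they were written and report exactly the records of the reads they
   served; faulty objects may report arbitrary logs (omissions / forged records). *)
definition admissible ::
  "nat \<Rightarrow> nat \<Rightarrow> nat set \<Rightarrow> (nat \<times> 'v) set \<Rightarrow> (nat \<times> 'r \<times> 'v) set \<Rightarrow> (nat \<Rightarrow> ('r \<times> 'v) set) \<Rightarrow> bool" where
  "admissible n f Fa W R Lg \<longleftrightarrow>
     Fa \<subseteq> {..<n} \<and> card Fa \<le> f \<and>
     (\<forall>k v. (k, v) \<in> W \<longrightarrow> k < n) \<and>
     (\<forall>k p v. (k, p, v) \<in> R \<longrightarrow> k < n) \<and>
     (\<forall>k p v. k \<notin> Fa \<and> (k, p, v) \<in> R \<longrightarrow> (k, v) \<in> W) \<and>
     (\<forall>k < n. k \<notin> Fa \<longrightarrow> Lg k = {(p, v). (k, p, v) \<in> R})"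

(* An a-audit algorithm: given the auditing quorum A and the logs reported by the
   objects, it returns the set E_A of evidences (pairs (p_r, v) standing for E_{p_r,v}). *)
definition audit_alg :: "nat \<Rightarrow> (nat set \<Rightarrow> (nat \<Rightarrow> ('r \<times> 'v) set) \<Rightarrow> ('r \<times> 'v) set) \<Rightarrow> bool" where
  "audit_alg t aud \<longleftrightarrow>
     (\<forall>A L L'. (\<forall>k\<in>A. L k = L' k) \<longrightarrow> aud A L = aud A L') \<and>
     (\<forall>A L p v. (p, v) \<in> aud A L \<longrightarrow> t \<le> card {k \<in> A. (p, v) \<in> L k})"

definition audit_complete ::
  "nat \<Rightarrow> nat \<Rightarrow> nat \<Rightarrow> (nat set \<Rightarrow> (nat \<Rightarrow> ('r \<times> 'v) set) \<Rightarrow> ('r \<times> 'v) set) \<Rightarrow> bool" where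
  "audit_complete n f \<tau> aud \<longleftrightarrow>
     (\<forall>Fa W R Lg A. admissible n f Fa W R Lg \<and> A \<subseteq> {..<n} \<and> card A = n - f \<longrightarrow>
        (\<forall>p v. effectively_read \<tau> W R p v \<longrightarrow> (p, v) \<in> aud A Lg))"

end

theory Submission
  imports Defs
begin

theorem lemma2:
  fixes n f \<tau> t :: nat
  assumes "1 \<le> t" and "f < \<tau>" and "\<tau> \<le> n" and "\<tau> \<le> 2 * f"
  shows "\<not> (\<exists>aud :: nat set \<Rightarrow> (nat \<Rightarrow> ('r \<times> 'v) set) \<Rightarrow> ('r \<times> 'v) set.
             audit_alg t aud \<and> audit_complete n f \<tau> aud)"
proof
  assume "\<exists>aud :: nat set \<Rightarrow> (nat \<Rightarrow> ('r \<times> 'v) set) \<Rightarrow> ('r \<times> 'v) set.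
             audit_alg t aud \<and> audit_complete n f \<tau> aud"
  then obtain aud :: "nat set \<Rightarrow> (nat \<Rightarrow> ('r \<times> 'v) set) \<Rightarrow> ('r \<times> 'v) set"
    where al: "audit_alg t aud" and co: "audit_complete n f \<tau> aud" by blast
  obtain p :: 'r and v :: 'v where True by blast
  define Fa where "Fa = {f..<\<tau>}"
  define W where "W = {(k, v) | k. k < \<tau>}"
  define R where "R = {(k, p, v) | k. k < \<tau>}"
  define Lg where "Lg = (\<lambda>k::nat. if k < f then {(p, v)} else ({} :: ('r \<times> 'v) set))"
  define A where "A = {f..<n}"
  have c1: "Fa \<subseteq> {..<n}" using assms unfolding Fa_def by auto
  have c2: "card Fa \<le> f" using assms unfolding Fa_def by simp
  have c3: "\<forall>k v. (k, v) \<in> W \<longrightarrow> k < n" using assms unfolding W_def by auto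
  have c4: "\<forall>k p v. (k, p, v) \<in> R \<longrightarrow> k < n" using assms unfolding R_def by auto
  have c5: "\<forall>k p v. k \<notin> Fa \<and> (k, p, v) \<in> R \<longrightarrow> (k, v) \<in> W"
    unfolding R_def W_def by auto
  have c6: "\<forall>k < n. k \<notin> Fa \<longrightarrow> Lg k = {(p', v'). (k, p', v') \<in> R}"
  proof (intro allI impI)
    fix k assume "k < n" "k \<notin> Fa"
    then have "k < f \<or> \<tau> \<le> k" unfolding Fa_def by auto
    then show "Lg k = {(p', v'). (k, p', v') \<in> R}"
    proof
      assume "k < f" then show ?thesis using assms unfolding Lg_def R_def by auto
    next
      assume "\<tau> \<le> k" then show ?thesis using assms unfolding Lg_def R_def by auto
    qed
  qed
  have adm: "admissible n f Fa W R Lg"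
    unfolding admissible_def using c1 c2 c3 c4 c5 c6 by blast
  have A: "A \<subseteq> {..<n} \<and> card A = n - f" unfolding A_def by auto
  have "providing W R p v = {..<\<tau>}"
    unfolding providing_def W_def R_def by auto
  hence er: "effectively_read \<tau> W R p v" unfolding effectively_read_def by simp
  have "(p, v) \<in> aud A Lg"
    using co[unfolded audit_complete_def, rule_format, OF conjI[OF adm A] er] .
  hence "t \<le> card {k \<in> A. (p, v) \<in> Lg k}"
    using al[unfolded audit_alg_def] by (elim conjE) (rule spec[of _ v, OF spec[of _ p, OF spec[of _ Lg, OF spec[of _ A]]], THEN mp])
  moreover have "{k \<in> A. (p, v) \<in> Lg k} = {}" unfolding A_def Lg_def by auto
  ultimately show False using assms(1) by simp
qed

end
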